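(* Let $\mathcal{H}$ be a Hilbert space, $h\in\mathcal{H}$, $\mathcal{L}$ a nonempty set of closed subspaces of $\mathcal{H}$, and define $\mathcal{C}: 2^{\mathcal{L}}\to 2^{\mathcal{L}}$ by $b\in\mathcal{C}(A)$ iff $A^*_p(h)\in b$. If $A,B\subseteq\mathcal{L}$ and $B\subseteq\mathcal{C}(A)$, then $A^*_p(h)=(A^*\cap B^* )_p(h)$ and $d(h,A^* )\ge d(h,B^* )$.
   Context: For $A\subseteq\mathcal{L}$, $A^*=\bigcap_{a\in A}a$ (with $A^*=\mathcal{H}$ if $A=\emptyset$); for a closed subspace $V$, $V_p$ denotes the orthogonal projection onto $V$ (so $V_p(h)$ is the point of $V$ closest to $h$), and $A^*_p=(A^* )_p$. $d(h,V)$ denotes the distance from $h$ to the closed subspace $V$. *)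

theory Defs
  imports "HOL-Analysis.Analysis"
begin

definition closed_subspace :: "'a::real_inner set \<Rightarrow> bool" where
  "closed_subspace V \<longleftrightarrow> subspace V \<and> closed V"

definition orth_proj :: "'a::real_inner set \<Rightarrow> 'a \<Rightarrow> 'a" where
  "orth_proj V h = (THE x. x \<in> V \<and> (\<forall>y\<in>V. dist h x \<le> dist h y))"

text \<open>A* = intersection of A (UNIV for A empty, as Inter {} = UNIV).\<close>
abbreviation star :: "'a set set \<Rightarrow> 'a set" where
  "star A \<equiv> \<Inter> A"

definition closure_op :: "'a::real_inner set set \<Rightarrow> 'a \<Rightarrow> 'a set set \<Rightarrow> 'a set set" where
  "closure_op L h A = {b \<in> L. orth_proj (\<Inter> A) h \<in> b}"

end

theory Submission
  imports Defs
begin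

lemma min_orth:
  fixes V :: "'a::real_inner set"
  assumes "subspace V" "x \<in> V" "\<forall>y\<in>V. dist h x \<le> dist h y" "v \<in> V"
  shows "inner (h - x) v = 0"
proof -
  define c where "c = inner (h - x) v"
  define n where "n = inner v v"
  have n0: "n \<ge> 0" unfolding n_def by simp
  have key: "0 \<le> t*t*n - 2*t*c" for t :: real
  proof -
    have "x + t *\<^sub>R v \<in> V" using assms by (simp add: subspace_add subspace_scale)
    then have "dist h x \<le> dist h (x + t *\<^sub>R v)" using assms(3) by blast
    then have "norm (h - x) ^ 2 \<le> norm (h - x - t *\<^sub>R v) ^ 2"
      by (simp add: dist_norm diff_diff_eq power_mono)
    also have "\<dots> = norm (h - x) ^ 2 - 2*t*c + t*t*n"
      unfolding power2_norm_eq_inner c_def n_def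
      by (simp add: inner_diff_left inner_diff_right inner_commute algebra_simps)
    finally show ?thesis by simp
  qed
  define t where "t = c / (n+1)"
  have nz: "n + 1 \<noteq> 0" using n0 by simp
  have ts: "t*(n+1) = c" unfolding t_def using nz by simp
  have "(n+1)*(n+1)*(t*t*n - 2*t*c) = (t*(n+1))*(t*(n+1))*n - 2*(t*(n+1))*c*(n+1)"
    by (simp add: algebra_simps)
  also have "\<dots> = - ((c*c)*(n+2))" unfolding ts by (simp add: algebra_simps)
  finally have eq: "(n+1)*(n+1)*(t*t*n - 2*t*c) = - ((c*c)*(n+2))" .
  have "0 \<le> (n+1)*(n+1)*(t*t*n - 2*t*c)" using key[of t] n0 by simp
  then have "0 \<le> - ((c*c)*(n+2))" unfolding eq .
  then have "(c*c)*(n+2) \<le> 0" by linarith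
  moreover have "\<not> c*c > 0"
  proof
    assume "c*c > 0"
    then have "(c*c)*(n+2) > 0" using n0 by simp
    then show False using calculation by linarith
  qed
  ultimately have "c*c \<le> 0" by linarith
  then show ?thesis unfolding c_def[symmetric]
    by (metis mult_eq_0_iff not_square_less_zero order_antisym_conv zero_le_square)
qed

lemma min_unique:
  fixes V :: "'a::real_inner set"
  assumes "subspace V" "x \<in> V" "\<forall>z\<in>V. dist h x \<le> dist h z"
    "y \<in> V" "\<forall>z\<in>V. dist h y \<le> dist h z"
  shows "x = y"
proof -
  have d: "x - y \<in> V" using assms by (simp add: subspace_diff)
  have "inner (h - y) (x - y) = 0" using min_orth[OF assms(1) assms(4) assms(5) d] .
  moreover have "inner (h - x) (x - y) = 0" using min_orth[OF assms(1) assms(2) assms(3) d] .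
  ultimately have "inner (x - y) (x - y) = 0"
    by (metis (no_types, lifting) cancel_comm_monoid_add_class.diff_cancel diff_diff_eq2
        inner_diff_left inner_commute diff_zero)
  then show ?thesis by simp
qed

lemma paral:
  fixes h x y :: "'a::real_inner"
  shows "norm (x - y)^2 + 4 * norm (h - (1/2) *\<^sub>R (x + y))^2
       = 2 * norm (h - x)^2 + 2 * norm (h - y)^2"
  unfolding power2_norm_eq_inner
  by (simp add: inner_diff_left inner_diff_right inner_add_left inner_add_right
      inner_commute algebra_simps)

lemma min_exists:
  fixes V :: "'a::{real_inner, complete_space} set"
  assumes "closed_subspace V"
  shows "\<exists>x\<in>V. \<forall>y\<in>V. dist h x \<le> dist h y"
proof -
  have sub: "subspace V" and cl: "closed V" using assms unfolding closed_subspace_def by auto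
  have ne: "V \<noteq> {}" using subspace_0[OF sub] by auto
  define d where "d = infdist h V"
  have d0: "d \<ge> 0" unfolding d_def by (rule infdist_nonneg)
  have low: "d \<le> dist h y" if "y \<in> V" for y unfolding d_def using that by (rule infdist_le)
  have "\<exists>x\<in>V. dist h x < d + inverse (real (Suc n))" for n
  proof -
    have "Inf ((\<lambda>a. dist h a) ` V) < d + inverse (real (Suc n))"
      using infdist_notempty[OF ne, of h] unfolding d_def by simp
    then obtain z where "z \<in> (\<lambda>a. dist h a) ` V" "z < d + inverse (real (Suc n))"
      using cInf_lessD[of "(\<lambda>a. dist h a) ` V"] ne by blast
    then show ?thesis by auto
  qed
  then obtain x where xV: "\<And>n. x n \<in> V" and xd: "\<And>n. dist h (x n) < d + inverse (real (Suc n))"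
    by metis
  have bnd: "norm (x m - x n)^2 \<le> 2 * dist h (x m)^2 + 2 * dist h (x n)^2 - 4 * d^2" for m n
  proof -
    have "(1/2) *\<^sub>R (x m + x n) \<in> V" using xV sub by (simp add: subspace_add subspace_scale)
    then have "d \<le> norm (h - (1/2) *\<^sub>R (x m + x n))" using low dist_norm by metis
    then have "d^2 \<le> norm (h - (1/2) *\<^sub>R (x m + x n))^2" using d0 by (simp add: power_mono)
    then show ?thesis using paral[of "x m" "x n" h] by (simp add: dist_norm)
  qed
  have sq: "dist h (x n)^2 < (d + inverse (real (Suc M)))^2" if "n \<ge> M" for n M
  proof -
    have "inverse (real (Suc n)) \<le> inverse (real (Suc M))" using that
      by (simp add: le_imp_inverse_le)
    then have "dist h (x n) < d + inverse (real (Suc M))" using xd[of n] by linarith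
    then show ?thesis by (simp add: power_strict_mono)
  qed
  have "Cauchy x"
  proof (rule CauchyI)
    fix e :: real assume e: "0 < e"
    obtain M :: nat where M: "real M > 4 * (2*d+1) / e^2" using reals_Archimedean2 by blast
    define \<delta> where "\<delta> = inverse (real (Suc M))"
    have \<delta>0: "0 < \<delta>" "\<delta> \<le> 1" unfolding \<delta>_def by (auto simp: field_simps)
    have "4 * (2*d+1) / e^2 < real (Suc M)" using M by simp
    then have "4 * (2*d+1) < e^2 * real (Suc M)" using e by (simp add: field_simps)
    then have "4 * (2*d+1) * \<delta> < e^2" unfolding \<delta>_def by (simp add: field_simps)
    moreover have "4 * \<delta> * (2*d+\<delta>) \<le> 4 * (2*d+1) * \<delta>" using \<delta>0 d0
      by (simp add: mult_left_mono algebra_simps)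
    ultimately have E: "4 * \<delta> * (2*d+\<delta>) < e^2" by linarith
    show "\<exists>M. \<forall>m\<ge>M. \<forall>n\<ge>M. norm (x m - x n) < e"
    proof (intro exI allI impI)
      fix m n assume mn: "M \<le> m" "M \<le> n"
      have "norm (x m - x n)^2 < 4 * (d + \<delta>)^2 - 4 * d^2"
        using bnd[of m n] sq[OF mn(1)] sq[OF mn(2)] unfolding \<delta>_def by linarith
      also have "\<dots> = 4 * \<delta> * (2*d+\<delta>)" by (simp add: power2_eq_square algebra_simps)
      finally have "norm (x m - x n)^2 < e^2" using E by linarith
      then show "norm (x m - x n) < e" using e by (simp add: power_less_imp_less_base)
    qed
  qed
  then obtain l where lim: "x \<longlonglongrightarrow> l" using Cauchy_convergent_iff convergent_def by blast
  have lV: "l \<in> V" using cl xV lim closed_sequentially by blast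
  have "(\<lambda>n. dist h (x n)) \<longlonglongrightarrow> dist h l" using lim by (intro tendsto_intros)
  moreover have "(\<lambda>n. d + inverse (real (Suc n))) \<longlonglongrightarrow> d + 0"
    by (intro tendsto_intros LIMSEQ_inverse_real_of_nat)
  ultimately have "dist h l \<le> d + 0"
    using xd by (intro tendsto_le[of sequentially]) (auto intro!: always_eventually less_imp_le)
  then show ?thesis using lV low by force
qed

lemma csub_Inter:
  assumes "\<forall>V\<in>S. closed_subspace V"
  shows "closed_subspace (\<Inter> S)"
  using assms unfolding closed_subspace_def
  by (simp add: subspace_Inter closed_Inter)

lemma orth_proj_eq:
  assumes "closed_subspace V" "x \<in> V" "\<forall>y\<in>V. dist h x \<le> dist h y"
  shows "orth_proj V h = x"
  unfolding orth_proj_def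
proof (rule the_equality)
  show "x \<in> V \<and> (\<forall>y\<in>V. dist h x \<le> dist h y)" using assms by auto
next
  fix z assume "z \<in> V \<and> (\<forall>y\<in>V. dist h z \<le> dist h y)"
  then show "z = x" using min_unique[of V z h x] assms unfolding closed_subspace_def by auto
qed

theorem lemma20:
  fixes L :: "'a::{real_inner, complete_space} set set"
    and h :: 'a
    and A B :: "'a set set"
  assumes "\<forall>V\<in>L. closed_subspace V"
    and "L \<noteq> {}"
    and "A \<subseteq> L" and "B \<subseteq> L"
    and "B \<subseteq> closure_op L h A"
  shows "orth_proj (\<Inter> A) h = orth_proj (\<Inter> A \<inter> \<Inter> B) h
       \<and> infdist h (\<Inter> A) \<ge> infdist h (\<Inter> B)"
proof -
  have cA: "closed_subspace (\<Inter> A)" using csub_Inter assms(1,3) by blast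
  have cB: "closed_subspace (\<Inter> B)" using csub_Inter assms(1,4) by blast
  have cAB: "closed_subspace (\<Inter> A \<inter> \<Inter> B)" using cA cB
    unfolding closed_subspace_def by (simp add: subspace_inter closed_Int)
  obtain x where xA: "x \<in> \<Inter> A" and xm: "\<forall>y\<in>\<Inter> A. dist h x \<le> dist h y"
    using min_exists[OF cA] by blast
  have px: "orth_proj (\<Inter> A) h = x" using orth_proj_eq[OF cA xA xm] .
  have xB: "x \<in> \<Inter> B" using assms(5) px unfolding closure_op_def by auto
  have "orth_proj (\<Inter> A \<inter> \<Inter> B) h = x"
    using orth_proj_eq[OF cAB] xA xB xm by auto
  moreover have "infdist h (\<Inter> B) \<le> infdist h (\<Inter> A)"
  proof -
    have "infdist h (\<Inter> B) \<le> dist h x" using xB by (rule infdist_le)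
    also have "dist h x \<le> infdist h (\<Inter> A)"
    proof -
      have ne: "\<Inter> A \<noteq> {}" using xA by blast
      have "dist h x \<le> (INF a\<in>\<Inter> A. dist h a)" by (intro cINF_greatest ne) (use xm in auto)
      then show ?thesis using infdist_notempty[OF ne, of h] by simp
    qed
    finally show ?thesis .
  qed
  ultimately show ?thesis using px by simp
qed

end
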